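(* Let $n\ge 2$. For $\alpha\in\mathbb{Z}_2^{n-1}$ and a bit $a$, write $\alpha a=(\alpha_0,\dots,\alpha_{n-2},a)\in\mathbb{Z}_2^n$; for $\alpha\in\mathbb{Z}_2^{n-2}$ and bits $a,b$, write $\alpha ab=(\alpha_0,\dots,\alpha_{n-3},a,b)\in\mathbb{Z}_2^n$. Then: (1) for every $\alpha\in\mathbb{Z}_2^{n-1}$, $\max_{\beta,\gamma\in\mathbb{Z}_2^n}\mathrm{adp}^{\mathrm{XR}}_{n-1}(\alpha0,\beta\to\gamma)=\mathrm{adp}^{\mathrm{XR}}_{n-1}(\alpha0,\alpha0\to0)$; (2) for every $\alpha\in\mathbb{Z}_2^{n-2}$, $\max_{\beta,\gamma\in\mathbb{Z}_2^n}\mathrm{adp}^{\mathrm{XR}}_{n-1}(\alpha01,\beta\to\gamma)=\mathrm{adp}^{\mathrm{XR}}_{n-1}(\alpha01,\alpha00\to2^{n-1})$; (3) for every $\alpha\in\mathbb{Z}_2^{n-2}$, $\max_{\beta,\gamma\in\mathbb{Z}_2^n}\mathrm{adp}^{\mathrm{XR}}_{n-1}(\alpha11,\beta\to\gamma)=\mathrm{adp}^{\mathrm{XR}}_{n-1}(\alpha11,\overline{\alpha}00\to2^{n-1})$.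
   Context: For $x\in\mathbb{Z}_2^n$ write $x=(x_0,\dots,x_{n-1})$ and identify $x$ with the integer $\sum_{i=0}^{n-1}x_i2^{n-1-i}$, so $x_0$ is the most significant bit; $x+y$, $x-y$, $-x$ are computed modulo $2^n$; $2^{n-1}$ is the vector $(1,0,\dots,0)$. $\oplus$ is bitwise XOR, $\overline{x}=(x_0\oplus1,\dots,x_{m-1}\oplus1)$ is the bitwise complement, and $x\lll r=(x_r,\dots,x_{n-1},x_0,\dots,x_{r-1})$. For $f:(\mathbb{Z}_2^n)^k\to\mathbb{Z}_2^n$, $\mathrm{adp}^f(\alpha_1,\dots,\alpha_k\to\alpha_{k+1})=2^{-kn}\#\{(x_1,\dots,x_k): f(x_1+\alpha_1,\dots,x_k+\alpha_k)=f(x_1,\dots,x_k)+\alpha_{k+1}\}$. For $1\le r\le n-1$, $\mathrm{adp}^{\mathrm{XR}}_r$ denotes $\mathrm{adp}^f$ for $f(x,y)=(x\oplus y)\lll r$. *)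

theory Defs
  imports Complex_Main
begin

text \<open>Elements of Z_2^n are represented by naturals in {0..<2^n}; bit x_i (MSB-first)
  is bit (n-1-i) of the integer. Arithmetic is modulo 2^n.\<close>

definition words :: "nat \<Rightarrow> nat set" where
  "words n = {0..<2^n}"

definition addm :: "nat \<Rightarrow> nat \<Rightarrow> nat \<Rightarrow> nat" where
  "addm n x y = (x + y) mod 2^n"

text \<open>Left rotation x <<< r = (x_r,...,x_{n-1},x_0,...,x_{r-1}).\<close>
definition rotl :: "nat \<Rightarrow> nat \<Rightarrow> nat \<Rightarrow> nat" where
  "rotl n r x = (x * 2^r) mod 2^n + x div 2^(n - r)"

definition XR :: "nat \<Rightarrow> nat \<Rightarrow> nat \<Rightarrow> nat \<Rightarrow> nat" where
  "XR n r x y = rotl n r (xor x y)"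

definition adp2 :: "nat \<Rightarrow> (nat \<Rightarrow> nat \<Rightarrow> nat) \<Rightarrow> nat \<Rightarrow> nat \<Rightarrow> nat \<Rightarrow> real" where
  "adp2 n f a1 a2 a3 = real (card {(x, y). x \<in> words n \<and> y \<in> words n \<and>
      f (addm n x a1) (addm n y a2) = addm n (f x y) a3}) / 2 ^ (2 * n)"

definition adpXR :: "nat \<Rightarrow> nat \<Rightarrow> nat \<Rightarrow> nat \<Rightarrow> nat \<Rightarrow> real" where
  "adpXR n r a b c = adp2 n (XR n r) a b c"

end

theory Submission
  imports Defs
begin

lemma xor_split: "xor (a::nat) b = (a + b) mod 2 + 2 * xor (a div 2) (b div 2)"
  by (subst xor_rec) (auto simp: mod2_eq_if)

lemma mod_split: "(z::nat) mod 2^(Suc k) = z mod 2 + 2 * ((z div 2) mod 2^k)"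
  by (metis mod_mult2_eq power_Suc add.commute)

lemma sum_split2: "(\<Sum>y<2*K. f y) = (\<Sum>y<K. f (2*y) + f (2*y+1::nat))"
proof (induct K)
  case (Suc K)
  have "2 * Suc K = Suc (Suc (2*K))" by simp
  then show ?case using Suc by (simp add: lessThan_Suc add_ac)
qed simp

lemma sum_splitS: "(\<Sum>y<2^Suc k. f y) = (\<Sum>y<2^k. f (2*y) + f (2*y+1::nat))"
proof -
  have "(2::nat)^Suc k = 2 * 2^k" by simp
  then show ?thesis using sum_split2[where K="2^k" and f=f] by (simp only:)
qed

lemma sum_splitS': "(\<Sum>y<2^Suc k. f y) = (\<Sum>y<2^k. f (2*y+0::nat)) + (\<Sum>y<2^k. f (2*y+1::nat))"
  unfolding sum_splitS by (simp add: sum.distrib)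

definition FF :: "nat \<Rightarrow> nat \<Rightarrow> nat \<Rightarrow> nat \<Rightarrow> int \<Rightarrow> nat" where
  "FF k x p q d = (\<Sum>y<2^k. of_bool (int (xor ((x+p) mod 2^k) ((y+q) mod 2^k)) - int (xor x y) = d))"

definition RR :: "nat \<Rightarrow> nat \<Rightarrow> nat \<Rightarrow> nat" where
  "RR k x p = (\<Sum>z<2^k. of_bool (xor ((z+p) mod 2^k) z = xor ((x+p) mod 2^k) x))"

lemma xor_low: "xor (a0 + 2*a) (b0 + 2*b) = (a0 + b0) mod 2 + 2 * xor a b" if "a0 < 2" "b0 < 2" for a0 a b0 b :: nat
proof -
  have m: "(a0 + 2*a + (b0 + 2*b)) mod 2 = (a0+b0) mod 2" by presburger
  have d1: "(a0 + 2*a) div 2 = a" "(b0 + 2*b) div 2 = b" using that by auto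
  show ?thesis by (subst xor_split) (simp only: m d1)
qed

lemma ofb_split: "(of_bool (e + 2 * (Z::int) = d) :: nat) = (if even (d - e) then of_bool (Z = (d - e) div 2) else 0)"
  by auto presburger+

definition FS :: "nat \<Rightarrow> nat \<Rightarrow> nat \<Rightarrow> nat \<Rightarrow> int \<Rightarrow> nat \<Rightarrow> nat" where
  "FS k x p q d y0 = (let e = int (((x+p) mod 2 + (y0+q) mod 2) mod 2) - int ((x mod 2 + y0) mod 2)
     in if even (d - e) then FF k (x div 2) (p div 2 + (x mod 2 + p mod 2) div 2) ((y0+q) div 2) ((d - e) div 2) else 0)"

lemma term_split:
  fixes x p q y y0 k :: nat
  assumes "y0 < 2"
  defines "e \<equiv> int (((x+p) mod 2 + (y0+q) mod 2) mod 2) - int ((x mod 2 + y0) mod 2)"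
  shows "(of_bool (int (xor ((x+p) mod 2^Suc k) ((2*y+y0+q) mod 2^Suc k)) - int (xor x (2*y+y0)) = d) :: nat)
    = (if even (d - e) then of_bool (int (xor ((x div 2 + (p div 2 + (x mod 2 + p mod 2) div 2)) mod 2^k) ((y + (y0+q) div 2) mod 2^k)) - int (xor (x div 2) y) = (d - e) div 2) else 0)"
proof -
  have h1: "(x+p) mod 2^Suc k = (x+p) mod 2 + 2 * ((x div 2 + (p div 2 + (x mod 2 + p mod 2) div 2)) mod 2^k)"
  proof -
    have "(x+p) div 2 = x div 2 + (p div 2 + (x mod 2 + p mod 2) div 2)" by presburger
    then show ?thesis using mod_split[of "x+p" k] by simp
  qed
  have h2: "(2*y+y0+q) mod 2^Suc k = (y0+q) mod 2 + 2 * ((y + (y0+q) div 2) mod 2^k)"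
  proof -
    have "(2*y+y0+q) div 2 = y + (y0+q) div 2" by presburger
    moreover have "(2*y+y0+q) mod 2 = (y0+q) mod 2" by presburger
    ultimately show ?thesis using mod_split[of "2*y+y0+q" k] by simp
  qed
  have h3: "xor x (2*y+y0) = (x mod 2 + y0) mod 2 + 2 * xor (x div 2) y"
    using xor_low[of "x mod 2" y0 "x div 2" y] assms(1) by (simp add: add.commute)
  have h4: "xor ((x+p) mod 2^Suc k) ((2*y+y0+q) mod 2^Suc k) = ((x+p) mod 2 + (y0+q) mod 2) mod 2 + 2 * xor ((x div 2 + (p div 2 + (x mod 2 + p mod 2) div 2)) mod 2^k) ((y + (y0+q) div 2) mod 2^k)"
    unfolding h1 h2 by (rule xor_low) auto
  have h5: "int (((x+p) mod 2 + (y0+q) mod 2) mod 2 + 2 * X) - int ((x mod 2 + y0) mod 2 + 2 * Y)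
     = e + 2 * (int X - int Y)" for X Y :: nat
    unfolding e_def by simp
  show ?thesis apply (subst h3) apply (subst h4) apply (subst h5) apply (rule ofb_split) done
qed

lemma sum_if_c: "(\<Sum>y\<in>A. if c then f y else (0::nat)) = (if c then sum f A else 0)"
  by (cases c) simp_all

lemma FS_eq:
  assumes "y0 < 2"
  shows "(\<Sum>y<2^k. (of_bool (int (xor ((x+p) mod 2^Suc k) ((2*y+y0+q) mod 2^Suc k)) - int (xor x (2*y+y0)) = d) :: nat))
     = FS k x p q d y0"
proof -
  let ?e = "int (((x+p) mod 2 + (y0+q) mod 2) mod 2) - int ((x mod 2 + y0) mod 2)"
  have "(\<Sum>y<2^k. (of_bool (int (xor ((x+p) mod 2^Suc k) ((2*y+y0+q) mod 2^Suc k)) - int (xor x (2*y+y0)) = d) :: nat))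
    = (\<Sum>y<2^k. if even (d - ?e) then of_bool (int (xor ((x div 2 + (p div 2 + (x mod 2 + p mod 2) div 2)) mod 2^k) ((y + (y0+q) div 2) mod 2^k)) - int (xor (x div 2) y) = (d - ?e) div 2) else 0)"
    by (rule sum.cong[OF refl], rule term_split[OF assms])
  also have "\<dots> = FS k x p q d y0"
    unfolding FS_def Let_def FF_def by (rule sum_if_c)
  finally show ?thesis .
qed

lemma FF_Suc: "FF (Suc k) x p q d = FS k x p q d 0 + FS k x p q d 1"
proof -
  have a: "(0::nat) < 2" "(1::nat) < 2" by auto
  show ?thesis unfolding FF_def sum_splitS' FS_eq[OF a(1)] FS_eq[OF a(2)] ..
qed

lemma FS_alt:
  "FS k x p q d y0 = (let e = int ((x mod 2 + p mod 2 + y0 + q mod 2) mod 2) - int ((x mod 2 + y0) mod 2)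
     in if even (d - e) then FF k (x div 2) (p div 2 + (x mod 2 + p mod 2) div 2) (q div 2 + (y0 + q mod 2) div 2) ((d - e) div 2) else 0)"
proof -
  have a: "((x+p) mod 2 + (y0+q) mod 2) mod 2 = (x mod 2 + p mod 2 + y0 + q mod 2) mod 2"
    by (simp add: mod2_eq_if split: if_splits)
  have b: "(y0+q) div 2 = q div 2 + (y0 + q mod 2) div 2"
  proof -
    have "y0 + q = (y0 + q mod 2) + 2 * (q div 2)" by simp
    then show ?thesis by (metis div_mult_self2 add.commute zero_neq_numeral)
  qed
  show ?thesis unfolding FS_def a b by (rule refl)
qed

lemma FS_le: "FS k x p q d y0 \<le> FF k (x div 2) (p div 2 + (x mod 2 + p mod 2) div 2) (q div 2 + (y0 + q mod 2) div 2) ((d - (int ((x mod 2 + p mod 2 + y0 + q mod 2) mod 2) - int ((x mod 2 + y0) mod 2))) div 2)"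
  unfolding FS_alt Let_def by simp

lemma FF_le_card: "FF k x p q d \<le> 2^k"
proof -
  have "FF k x p q d \<le> (\<Sum>y<(2::nat)^k. 1)"
    unfolding FF_def by (rule sum_mono) simp
  then show ?thesis by simp
qed

lemma mod_exp_mod2: "k \<ge> 1 \<Longrightarrow> ((a::nat) mod 2^k) mod 2 = a mod 2"
  by (metis Suc_le_D mod_mod_cancel dvd_power le_add1 zero_less_Suc le_imp_power_dvd power_one_right)

lemma even_mod_exp: "k \<ge> 1 \<Longrightarrow> even ((a::nat) mod 2^k) \<longleftrightarrow> even a"
  using mod_exp_mod2[of k a] by (simp add: even_iff_mod_2_eq_zero)

lemma FF_parity:
  assumes "k \<ge> 1" "odd (D - int P - int Q)"
  shows "FF k x P Q D = 0"
proof -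
  have "int (xor ((x+P) mod 2^k) ((y+Q) mod 2^k)) - int (xor x y) \<noteq> D" for y
  proof
    assume h: "int (xor ((x+P) mod 2^k) ((y+Q) mod 2^k)) - int (xor x y) = D"
    define W where "W = xor ((x+P) mod 2^k) ((y+Q) mod 2^k)"
    define Z where "Z = xor x y"
    have w: "even W \<longleftrightarrow> (even (x+P) \<longleftrightarrow> even (y+Q))"
      unfolding W_def even_xor_iff even_mod_exp[OF assms(1)] ..
    have z: "even Z \<longleftrightarrow> (even x \<longleftrightarrow> even y)" unfolding Z_def even_xor_iff ..
    have ev: "even (W + Z + P + Q)" using w z by (auto simp: even_add)
    have hD: "D = int W - int Z" using h unfolding W_def Z_def by simp
    have "D - int P - int Q = int (W + Z + P + Q) - 2 * (int Z + int P + int Q)"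
      unfolding hD by simp
    then have "even (D - int P - int Q)" using ev
      by (metis dvd_diff even_of_nat dvd_triv_left)
    then show False using assms(2) by simp
  qed
  then show ?thesis unfolding FF_def by simp
qed

lemma addmod_split: "((x::nat)+p) mod 2^Suc k = (x+p) mod 2 + 2 * ((x div 2 + (p div 2 + (x mod 2 + p mod 2) div 2)) mod 2^k)"
proof -
  have "(x+p) div 2 = x div 2 + (p div 2 + (x mod 2 + p mod 2) div 2)" by presburger
  then show ?thesis using mod_split[of "x+p" k] by simp
qed

lemma xor_self_low: "xor (((x::nat)+p) mod 2^Suc k) x = p mod 2 + 2 * xor ((x div 2 + (p div 2 + (x mod 2 + p mod 2) div 2)) mod 2^k) (x div 2)"
proof -
  have "xor ((x+p) mod 2^Suc k) x = xor ((x+p) mod 2 + 2 * ((x div 2 + (p div 2 + (x mod 2 + p mod 2) div 2)) mod 2^k)) (x mod 2 + 2 * (x div 2))"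
    by (rule arg_cong2[where f=xor]) (rule addmod_split, simp)
  also have "\<dots> = ((x+p) mod 2 + x mod 2) mod 2 + 2 * xor ((x div 2 + (p div 2 + (x mod 2 + p mod 2) div 2)) mod 2^k) (x div 2)"
    by (rule xor_low) auto
  also have "((x+p) mod 2 + x mod 2) mod 2 = p mod 2"
    by (simp add: mod2_eq_if split: if_splits)
  finally show ?thesis .
qed

lemma xor_self_low2: "(z0::nat) < 2 \<Longrightarrow> xor ((2*z+z0+p) mod 2^Suc k) (2*z+z0) = p mod 2 + 2 * xor ((z + (p div 2 + (z0 + p mod 2) div 2)) mod 2^k) z"
  using xor_self_low[of "2*z+z0" p k] by simp

definition RS :: "nat \<Rightarrow> nat \<Rightarrow> nat \<Rightarrow> nat \<Rightarrow> nat" where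
  "RS k x p z0 = (\<Sum>z<2^k. of_bool (xor ((z + (p div 2 + (z0 + p mod 2) div 2)) mod 2^k) z = xor ((x div 2 + (p div 2 + (x mod 2 + p mod 2) div 2)) mod 2^k) (x div 2)))"

lemma RR_Suc: "RR (Suc k) x p = RS k x p 0 + RS k x p 1"
proof -
  have a: "(0::nat) < 2" "(1::nat) < 2" by auto
  show ?thesis
    unfolding RR_def sum_splitS' xor_self_low2[OF a(1)] xor_self_low2[OF a(2)] xor_self_low RS_def
    by simp
qed

lemma RS_self: "RS k x p (x mod 2) = RR k (x div 2) (p div 2 + (x mod 2 + p mod 2) div 2)"
  unfolding RS_def RR_def by (simp add: add.assoc)

lemma RR_ge: "RR k (x div 2) (p div 2 + (x mod 2 + p mod 2) div 2) \<le> RR (Suc k) x p"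
proof -
  have "x mod 2 = 0 \<or> x mod 2 = 1" by auto
  then show ?thesis unfolding RR_Suc RS_self[symmetric] by auto
qed

lemma RR_even:
  assumes "even p" shows "RR (Suc k) x p = 2 * RR k (x div 2) (p div 2)"
proof -
  have pm: "p mod 2 = 0" using assms by (simp add: even_iff_mod_2_eq_zero)
  have xm: "(x mod 2 + 0) div 2 = 0" by simp
  show ?thesis by (subst RR_Suc) (simp add: RS_def RR_def pm)
qed

lemma even_xor_self: "k \<ge> 1 \<Longrightarrow> even (xor ((z+P) mod 2^k) (z::nat)) \<longleftrightarrow> even P"
  unfolding even_xor_iff even_mod_exp by (auto simp: even_add)

lemma RR_odd:
  assumes "odd p" "k \<ge> 1"
  shows "RR (Suc k) x p = RR k (x div 2) (p div 2 + x mod 2)"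
proof -
  have pm: "p mod 2 = 1" using assms(1) by (simp add: odd_iff_mod_2_eq_one)
  have z: "RS k x p (1 - x mod 2) = 0"
  proof -
    have "xor ((z + (p div 2 + (1 - x mod 2 + p mod 2) div 2)) mod 2^k) z \<noteq> xor ((x div 2 + (p div 2 + (x mod 2 + p mod 2) div 2)) mod 2^k) (x div 2)" for z
    proof
      assume h: "xor ((z + (p div 2 + (1 - x mod 2 + p mod 2) div 2)) mod 2^k) z = xor ((x div 2 + (p div 2 + (x mod 2 + p mod 2) div 2)) mod 2^k) (x div 2)"
      have "even (p div 2 + (1 - x mod 2 + p mod 2) div 2) \<longleftrightarrow> even (p div 2 + (x mod 2 + p mod 2) div 2)"
        using arg_cong[OF h, of even] unfolding even_xor_self[OF assms(2)] .
      then show False unfolding pm by (auto simp: mod2_eq_if even_add split: if_splits)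
    qed
    then show ?thesis unfolding RS_def by simp
  qed
  have "x mod 2 = 0 \<or> x mod 2 = 1" by auto
  then have "RR (Suc k) x p = RS k x p (x mod 2) + RS k x p (1 - x mod 2)"
    unfolding RR_Suc by auto
  also have "\<dots> = RR k (x div 2) (p div 2 + x mod 2)"
    unfolding z RS_self pm by (simp add: mod2_eq_if)
  finally show ?thesis .
qed

lemma RR_one: "x < 2 \<Longrightarrow> RR 1 x p = 2"
  using RR_Suc[of 0 x p] unfolding RS_def by simp

lemma FF_le_RR: "x < 2^k \<Longrightarrow> FF k x p q d \<le> RR k x p"
proof (induct k arbitrary: x p q d)
  case 0
  then show ?case unfolding FF_def RR_def by simp
next
  case (Suc k)
  have x': "x div 2 < 2^k" using Suc.prems by (simp add: less_mult_imp_div_less)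
  show ?case
  proof (cases "k = 0")
    case True
    then show ?thesis using FF_le_card[of 1 x p q d] RR_one[of x p] Suc.prems by simp
  next
    case False
    then have k1: "k \<ge> 1" by simp
    have A2: "FF k (x div 2) P Q D + FF k (x div 2) P Q (D+1) \<le> RR k (x div 2) P" for P Q D
    proof (cases "odd (D - int P - int Q)")
      case True
      then show ?thesis using FF_parity[OF k1 True] Suc.hyps[OF x', of P Q "D+1"] by simp
    next
      case False
      have eq: "D + 1 - int P - int Q = (D - int P - int Q) + 1" by simp
      have o: "odd (D + 1 - int P - int Q)" using False unfolding eq by simp
      show ?thesis using FF_parity[OF k1 o] Suc.hyps[OF x', of P Q D] by simp
    qed
    have A3: "FF k (x div 2) P Q D + FF k (x div 2) P (Q+1) D \<le> RR k (x div 2) P" for P Q D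
    proof (cases "odd (D - int P - int Q)")
      case True
      then show ?thesis using FF_parity[OF k1 True] Suc.hyps[OF x', of P "Q+1" D] by simp
    next
      case False
      have eq: "D - int P - int (Q+1) = (D - int P - int Q) - 1" by simp
      have o: "odd (D - int P - int (Q+1))" using False unfolding eq by simp
      show ?thesis using FF_parity[OF k1 o] Suc.hyps[OF x', of P Q D] by simp
    qed
    have ge: "RR k (x div 2) (p div 2 + (x mod 2 + p mod 2) div 2) \<le> RR (Suc k) x p" by (rule RR_ge)
    have xm: "x mod 2 = 0 \<or> x mod 2 = 1" by auto
    show ?thesis
    proof (cases "even p")
      case True
      have pm: "p mod 2 = 0" using True by (simp add: even_iff_mod_2_eq_zero)
      have h: "FS k x p q d y0 \<le> RR k (x div 2) (p div 2)" for y0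
        using FS_le[of k x p q d y0] Suc.hyps[OF x'] pm xm by (auto intro: order.trans)
      show ?thesis unfolding FF_Suc RR_even[OF True] using h[of 0] h[of 1] by simp
    next
      case False
      have pm: "p mod 2 = 1" using False by (simp add: odd_iff_mod_2_eq_one)
      show ?thesis
      proof (cases "even q")
        case True
        have qm: "q mod 2 = 0" using True by (simp add: even_iff_mod_2_eq_zero)
        show ?thesis
        proof (cases "x mod 2 = 0")
          case x0: True
          have f0: "FS k x p q d 0 = (if even (d - 1) then FF k (x div 2) (p div 2) (q div 2) ((d - 1) div 2) else 0)"
            unfolding FS_alt Let_def using pm qm x0 by simp
          have f1: "FS k x p q d 1 = (if even (d + 1) then FF k (x div 2) (p div 2) (q div 2) ((d + 1) div 2) else 0)"
            unfolding FS_alt Let_def using pm qm x0 by simp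
          have "FS k x p q d 0 + FS k x p q d 1 \<le> RR k (x div 2) (p div 2)"
          proof (cases "even d")
            case True then show ?thesis unfolding f0 f1 by simp
          next
            case False
            then have "(d + 1) div 2 = (d - 1) div 2 + 1" by presburger
            then show ?thesis unfolding f0 f1 using False A2[of "p div 2" "q div 2" "(d - 1) div 2"] by simp
          qed
          then show ?thesis unfolding FF_Suc using ge pm x0 by simp
        next
          case x0: False
          then have x1: "x mod 2 = 1" by simp
          have f0: "FS k x p q d 0 = (if even (d + 1) then FF k (x div 2) (p div 2 + 1) (q div 2) ((d + 1) div 2) else 0)"
            unfolding FS_alt Let_def using pm qm x1 by simp
          have f1: "FS k x p q d 1 = (if even (d - 1) then FF k (x div 2) (p div 2 + 1) (q div 2) ((d - 1) div 2) else 0)"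
            unfolding FS_alt Let_def using pm qm x1 by simp
          have "FS k x p q d 0 + FS k x p q d 1 \<le> RR k (x div 2) (p div 2 + 1)"
          proof (cases "even d")
            case True then show ?thesis unfolding f0 f1 by simp
          next
            case False
            then have "(d + 1) div 2 = (d - 1) div 2 + 1" by presburger
            then show ?thesis unfolding f0 f1 using False A2[of "p div 2 + 1" "q div 2" "(d - 1) div 2"] by simp
          qed
          then show ?thesis unfolding FF_Suc using ge pm x1 by simp
        qed
      next
        case False
        have qm: "q mod 2 = 1" using False by (simp add: odd_iff_mod_2_eq_one)
        define P0 where "P0 = p div 2 + (x mod 2 + p mod 2) div 2"
        have f0: "FS k x p q d 0 = (if even d then FF k (x div 2) P0 (q div 2) (d div 2) else 0)"
          unfolding FS_alt Let_def P0_def using pm qm xm by auto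
        have f1: "FS k x p q d 1 = (if even d then FF k (x div 2) P0 (q div 2 + 1) (d div 2) else 0)"
          unfolding FS_alt Let_def P0_def using pm qm xm by auto
        have "FS k x p q d 0 + FS k x p q d 1 \<le> RR k (x div 2) P0"
          unfolding f0 f1 using A3[of P0 "q div 2" "d div 2"] by simp
        then show ?thesis unfolding FF_Suc using ge P0_def by simp
      qed
    qed
  qed
qed

definition NN :: "nat \<Rightarrow> nat \<Rightarrow> nat \<Rightarrow> int \<Rightarrow> nat" where
  "NN k p q d = (\<Sum>x<2^k. FF k x p q d)"

definition TT :: "nat \<Rightarrow> nat \<Rightarrow> nat" where
  "TT k p = (\<Sum>x<2^k. RR k x p)"

lemma NN_le_TT: "NN k p q d \<le> TT k p"
  unfolding NN_def TT_def by (rule sum_mono) (rule FF_le_RR, simp)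

lemma NN_parity: "k \<ge> 1 \<Longrightarrow> odd (D - int P - int Q) \<Longrightarrow> NN k P Q D = 0"
  unfolding NN_def using FF_parity by simp

lemma xor_swap_eq: "(xor (a::nat) b = xor c d) \<longleftrightarrow> (xor a c = xor b d)"
  by (auto simp: bit_eq_iff bit_xor_iff)

lemma RR_eq_FF: "RR k x p = FF k x p p 0"
  unfolding RR_def FF_def
proof (rule sum.cong[OF refl])
  fix y assume "y \<in> {..<(2::nat)^k}"
  have "(xor ((y + p) mod 2 ^ k) y = xor ((x + p) mod 2 ^ k) x) \<longleftrightarrow> (xor ((x + p) mod 2 ^ k) ((y + p) mod 2 ^ k) = xor x y)"
    by (metis xor_swap_eq)
  then show "(of_bool (xor ((y + p) mod 2 ^ k) y = xor ((x + p) mod 2 ^ k) x) :: nat) =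
         of_bool (int (xor ((x + p) mod 2 ^ k) ((y + p) mod 2 ^ k)) - int (xor x y) = 0)"
    by simp
qed

lemma TT_eq_NN: "TT k p = NN k p p 0"
  unfolding TT_def NN_def RR_eq_FF ..

lemma TT_one: "TT 1 p = 4"
  unfolding TT_def using RR_one by simp

lemma TT_even: "even p \<Longrightarrow> TT (Suc k) p = 4 * TT k (p div 2)"
proof -
  assume e: "even p"
  have "TT (Suc k) p = (\<Sum>x<2^k. RR (Suc k) (2*x+0) p) + (\<Sum>x<2^k. RR (Suc k) (2*x+1) p)"
    unfolding TT_def by (rule sum_splitS')
  also have "\<dots> = (\<Sum>x<2^k. 2 * RR k x (p div 2)) + (\<Sum>x<2^k. 2 * RR k x (p div 2))"
    unfolding RR_even[OF e] by simp
  also have "\<dots> = 4 * TT k (p div 2)" unfolding TT_def sum_distrib_left[symmetric] by simp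
  finally show ?thesis .
qed

lemma TT_odd: "odd p \<Longrightarrow> k \<ge> 1 \<Longrightarrow> TT (Suc k) p = TT k (p div 2) + TT k (p div 2 + 1)"
proof -
  assume o: "odd p" and k: "k \<ge> 1"
  have "TT (Suc k) p = (\<Sum>x<2^k. RR (Suc k) (2*x+0) p) + (\<Sum>x<2^k. RR (Suc k) (2*x+1) p)"
    unfolding TT_def by (rule sum_splitS')
  also have "\<dots> = (\<Sum>x<2^k. RR k x (p div 2)) + (\<Sum>x<2^k. RR k x (p div 2 + 1))"
    unfolding RR_odd[OF o k] by simp
  also have "\<dots> = TT k (p div 2) + TT k (p div 2 + 1)" unfolding TT_def ..
  finally show ?thesis .
qed

lemma TT_ratio: "k \<ge> 1 \<Longrightarrow> TT k (p+1) \<le> 3 * TT k p \<and> TT k p \<le> 3 * TT k (p+1)"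
proof (induct k arbitrary: p)
  case 0 then show ?case by simp
next
  case (Suc k)
  show ?case
  proof (cases "k = 0")
    case True then show ?thesis using TT_one by simp
  next
    case False
    then have k: "k \<ge> 1" by simp
    have IH: "TT k (h+1) \<le> 3 * TT k h" "TT k h \<le> 3 * TT k (h+1)" for h using Suc.hyps[OF k] by auto
    show ?thesis
    proof (cases "even p")
      case True
      have o: "odd (p+1)" using True by simp
      have h: "(p+1) div 2 = p div 2" using True by presburger
      show ?thesis unfolding TT_even[OF True] TT_odd[OF o k] h
        using IH[of "p div 2"] by simp
    next
      case False
      have e: "even (p+1)" using False by simp
      have h: "(p+1) div 2 = p div 2 + 1" using False by presburger
      show ?thesis unfolding TT_even[OF e] TT_odd[OF False k] h
        using IH[of "p div 2"] by simp
    qed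
  qed
qed

lemma TT_mono:
  assumes k: "k \<ge> 1"
  shows "(even p \<longrightarrow> TT k (p+1) \<le> TT k p) \<and> (odd p \<longrightarrow> TT k p \<le> TT k (p+1))"
proof (cases k)
  case 0 then show ?thesis using k by simp
next
  case (Suc j)
  show ?thesis
  proof (cases "j = 0")
    case True then show ?thesis using Suc TT_one by simp
  next
    case False
    then have j: "j \<ge> 1" by simp
    have IH: "TT j (h+1) \<le> 3 * TT j h" "TT j h \<le> 3 * TT j (h+1)" for h using TT_ratio[OF j] by auto
    show ?thesis
    proof (cases "even p")
      case True
      have o: "odd (p+1)" using True by simp
      have h: "(p+1) div 2 = p div 2" using True by presburger
      show ?thesis unfolding Suc TT_even[OF True] TT_odd[OF o j] h
        using IH[of "p div 2"] True by simp
    next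
      case False
      have e: "even (p+1)" using False by simp
      have h: "(p+1) div 2 = p div 2 + 1" using False by presburger
      show ?thesis unfolding Suc TT_even[OF e] TT_odd[OF False j] h
        using IH[of "p div 2"] False by simp
    qed
  qed
qed

lemma xor_lt: "(a::nat) < 2^k \<Longrightarrow> b < 2^k \<Longrightarrow> xor a b < 2^k"
proof (induct k arbitrary: a b)
  case 0 then show ?case by simp
next
  case (Suc k)
  have "a div 2 < 2^k" "b div 2 < 2^k" using Suc.prems by (auto simp: less_mult_imp_div_less)
  then have "xor (a div 2) (b div 2) < 2^k" by (rule Suc.hyps)
  moreover have "(a + b) mod 2 \<le> 1" by simp
  ultimately show ?case by (subst xor_split) simp
qed

lemma compl_decomp: "(b::nat) < 2*M \<Longrightarrow> 2*M - 1 - b = (1 - b mod 2) + 2*(M - 1 - b div 2)"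
proof -
  assume b: "b < 2*M"
  have bb: "b = 2*(b div 2) + b mod 2" by simp
  have "b mod 2 < 2" by simp
  have "b div 2 < M" using b by linarith
  then show ?thesis using bb \<open>b mod 2 < 2\<close> by linarith
qed

lemma c1g: "(b::nat) < 2*M \<Longrightarrow> (2*M - 1 - b) div 2 = M - 1 - b div 2"
  by (subst compl_decomp) auto

lemma c2g: "(b::nat) < 2*M \<Longrightarrow> (a + (2*M - 1 - b)) mod 2 = 1 - (a + b) mod 2"
proof -
  assume b: "b < 2*M"
  have s: "(a + (2*M-1-b)) + (a + b) + 1 = 2*(a+M)" using b by simp
  have "even ((a + (2*M-1-b)) + (a + b) + 1)" unfolding s by simp
  then have "even (a + (2*M-1-b)) \<longleftrightarrow> odd (a+b)" by simp
  then show ?thesis by (simp add: mod2_eq_if)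
qed

lemma xor_compl: "(a::nat) < 2^k \<Longrightarrow> b < 2^k \<Longrightarrow> xor a (2^k - 1 - b) = 2^k - 1 - xor a b"
proof (induct k arbitrary: a b)
  case 0 then show ?case by simp
next
  case (Suc k)
  have ab: "a div 2 < 2^k" "b div 2 < 2^k" using Suc.prems by (auto simp: less_mult_imp_div_less)
  have b2: "b < 2 * 2^k" using Suc.prems by simp
  have c1: "(2^Suc k - 1 - b) div 2 = 2^k - 1 - b div 2" using c1g[OF b2] by simp
  have c2: "(a + (2^Suc k - 1 - b)) mod 2 = 1 - (a + b) mod 2" using c2g[OF b2] by simp
  have x: "xor (a div 2) (b div 2) < 2^k" using ab by (rule xor_lt)
  show ?case
    apply (subst xor_split)
    apply (subst (2) xor_split)
    unfolding c1 c2 Suc.hyps[OF ab]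
    using x by (simp add: mod2_eq_if)
qed

lemma modrev: "(y::nat) < M \<Longrightarrow> p \<le> M \<Longrightarrow> (M - Suc y + (M - p)) mod M = M - 1 - (y+p) mod M"
proof (cases "y + p < M")
  case True
  assume a: "y < M" "p \<le> M"
  have e: "M - Suc y + (M - p) = (M - 1 - (y+p)) + M" using True a by linarith
  have "(M - 1 - (y+p) + M) mod M = (M - 1 - (y+p)) mod M" by (rule mod_add_self2)
  also have "\<dots> = M - 1 - (y+p)" using True by (intro mod_less) linarith
  finally show ?thesis unfolding e using True by simp
next
  case False
  assume a: "y < M" "p \<le> M"
  have e: "M - Suc y + (M - p) = M - 1 - (y + p - M)" using False a by linarith
  have l: "M - 1 - (y + p - M) < M" using a by linarith
  have m: "(y+p) mod M = y + p - M"
  proof -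
    have "(y+p) mod M = (y + p - M) mod M" using False by (simp add: le_mod_geq)
    also have "\<dots> = y + p - M" using a by simp
    finally show ?thesis .
  qed
  show ?thesis unfolding e m using l by simp
qed

lemma NN_compl:
  assumes "p \<le> 2^k"
  shows "NN k p (2^k - p) 0 = NN k p p 0"
proof -
  let ?M = "(2::nat)^k"
  have inner: "(\<Sum>y<?M. of_bool (int (xor ((x+p) mod ?M) ((y + (?M - p)) mod ?M)) - int (xor x y) = 0))
     = (\<Sum>y<?M. (of_bool (int (xor ((x+p) mod ?M) ((y + p) mod ?M)) - int (xor x y) = 0) :: nat))"
    if x: "x < ?M" for x
  proof -
    have "(\<Sum>y<?M. (of_bool (int (xor ((x+p) mod ?M) ((y + (?M - p)) mod ?M)) - int (xor x y) = 0) :: nat))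
       = (\<Sum>y<?M. of_bool (int (xor ((x+p) mod ?M) ((?M - Suc y + (?M - p)) mod ?M)) - int (xor x (?M - Suc y)) = 0))"
      by (rule sum.nat_diff_reindex[symmetric])
    also have "\<dots> = (\<Sum>y<?M. (of_bool (int (xor ((x+p) mod ?M) ((y + p) mod ?M)) - int (xor x y) = 0) :: nat))"
    proof (rule sum.cong[OF refl])
      fix y assume "y \<in> {..<?M}"
      then have y: "y < ?M" by simp
      have A: "(x+p) mod ?M < ?M" "(y+p) mod ?M < ?M" by simp_all
      have e1: "(?M - Suc y + (?M - p)) mod ?M = ?M - 1 - (y+p) mod ?M" using modrev[OF y assms] .
      have e2: "xor x (?M - Suc y) = ?M - 1 - xor x y" using xor_compl[OF x y] by simp
      have e3: "xor ((x+p) mod ?M) (?M - 1 - (y+p) mod ?M) = ?M - 1 - xor ((x+p) mod ?M) ((y+p) mod ?M)"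
        using xor_compl[OF A] .
      have l1: "xor ((x+p) mod ?M) ((y+p) mod ?M) < ?M" using xor_lt[OF A] .
      have l2: "xor x y < ?M" using xor_lt[OF x y] .
      show "(of_bool (int (xor ((x+p) mod ?M) ((?M - Suc y + (?M - p)) mod ?M)) - int (xor x (?M - Suc y)) = 0) :: nat)
          = of_bool (int (xor ((x+p) mod ?M) ((y + p) mod ?M)) - int (xor x y) = 0)"
        unfolding e1 e2 e3 using l1 l2 by simp
    qed
    finally show ?thesis .
  qed
  show ?thesis unfolding NN_def FF_def by (rule sum.cong[OF refl]) (rule inner, simp)
qed

lemma rot_equiv:
  fixes M V U c v0 u0 :: nat
  assumes "V < M" "U < M" "c < 2*M" "v0 < 2" "u0 < 2"
  shows "(v0*M + V = (u0*M + U + c) mod (2*M)) \<longleftrightarrow>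
    (int V - int U = (if (v0+u0) mod 2 = 0 then (if c < M then int c else int c - 2*int M) else int c - int M))"
proof -
  let ?t = "u0*M + U + c"
  have "u0 \<le> 1" using assms by simp
  then have "u0*M \<le> 1*M" by (rule mult_le_mono1)
  then have t4: "?t < 4*M" using assms by linarith
  have tm: "?t mod (2*M) = (if ?t < 2*M then ?t else ?t - 2*M)"
  proof (cases "?t < 2*M")
    case True then show ?thesis by simp
  next
    case False
    then have "?t mod (2*M) = (?t - 2*M) mod (2*M)" by (simp add: le_mod_geq)
    also have "\<dots> = ?t - 2*M" using t4 by (intro mod_less) linarith
    finally show ?thesis using False by simp
  qed
  have v: "v0 = 0 \<or> v0 = 1" and u: "u0 = 0 \<or> u0 = 1" using assms by auto
  show ?thesis unfolding tm using v u assms by (elim disjE) (auto split: if_splits)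
qed

definition Dv :: "nat \<Rightarrow> nat \<Rightarrow> nat \<Rightarrow> int" where
  "Dv m c s = (if s = 0 then (if c < 2^m then int c else int c - 2*2^m) else int c - 2^m)"

lemma rot_form: "rotl (Suc m) m v = (v mod 2) * 2^m + v div 2"
proof -
  have "(v * 2^m) mod 2^Suc m = (v mod 2) * 2^m"
    using mod_mult_mult2[of v "2^m" 2] by (simp add: mult.commute)
  then show ?thesis unfolding rotl_def by simp
qed

lemma cond_equiv:
  fixes x y a b c m :: nat
  assumes x: "x < 2^Suc m" and y: "y < 2^Suc m" and c: "c < 2^Suc m"
  shows "(XR (Suc m) m (addm (Suc m) x a) (addm (Suc m) y b) = addm (Suc m) (XR (Suc m) m x y) c) \<longleftrightarrow>
    (int (xor ((x div 2 + (a div 2 + (x mod 2 + a mod 2) div 2)) mod 2^m) ((y div 2 + (b div 2 + (y mod 2 + b mod 2) div 2)) mod 2^m)) - int (xor (x div 2) (y div 2)) = Dv m c ((a+b) mod 2))"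
proof -
  define V where "V = xor ((x div 2 + (a div 2 + (x mod 2 + a mod 2) div 2)) mod 2^m) ((y div 2 + (b div 2 + (y mod 2 + b mod 2) div 2)) mod 2^m)"
  define U where "U = xor (x div 2) (y div 2)"
  define v0 where "v0 = ((x+a) mod 2 + (y+b) mod 2) mod 2"
  define u0 where "u0 = (x+y) mod 2"
  have hv: "xor ((x+a) mod 2^Suc m) ((y+b) mod 2^Suc m) = v0 + 2*V"
    unfolding addmod_split[of x a m] addmod_split[of y b m] v0_def V_def by (rule xor_low) simp_all
  have hu: "xor x y = u0 + 2*U" unfolding u0_def U_def by (rule xor_split)
  have V: "V < 2^m" unfolding V_def by (rule xor_lt) simp_all
  have xd: "x div 2 < 2^m" "y div 2 < 2^m" using x y by (auto simp: less_mult_imp_div_less)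
  have U: "U < 2^m" unfolding U_def using xd by (rule xor_lt)
  have v0: "v0 < 2" "u0 < 2" unfolding v0_def u0_def by simp_all
  have r1: "rotl (Suc m) m (v0 + 2*V) = v0 * 2^m + V" unfolding rot_form using v0 by simp
  have r2: "rotl (Suc m) m (u0 + 2*U) = u0 * 2^m + U" unfolding rot_form using v0 by simp
  have par: "(v0 + u0) mod 2 = (a + b) mod 2"
  proof -
    have "even (v0 + u0) \<longleftrightarrow> even (a + b)"
      unfolding v0_def u0_def by (cases "even x"; cases "even a"; cases "even y"; cases "even b"; simp add: even_add)
    then show ?thesis by (simp add: mod2_eq_if)
  qed
  have "(XR (Suc m) m (addm (Suc m) x a) (addm (Suc m) y b) = addm (Suc m) (XR (Suc m) m x y) c) \<longleftrightarrow>
     (v0 * 2^m + V = (u0 * 2^m + U + c) mod (2 * 2^m))"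
    unfolding XR_def addm_def hv hu r1 r2 by simp
  also have "\<dots> \<longleftrightarrow> (int V - int U = Dv m c ((a+b) mod 2))"
  proof -
    have c2: "c < 2 * 2^m" using c by simp
    show ?thesis using rot_equiv[OF V U c2 v0] unfolding Dv_def par by simp
  qed
  finally show ?thesis unfolding V_def U_def .
qed

lemma card_pairs:
  fixes P :: "nat \<Rightarrow> nat \<Rightarrow> bool" and K :: nat
  shows "card {(x,y). x \<in> {0..<K} \<and> y \<in> {0..<K} \<and> P x y} = (\<Sum>x<K. \<Sum>y<K. (of_bool (P x y) :: nat))"
proof -
  have "{(x,y). x \<in> {0..<K} \<and> y \<in> {0..<K} \<and> P x y} = Sigma {..<K} (\<lambda>x. {..<K} \<inter> {y. P x y})" by auto
  then show ?thesis by (simp add: card_SigmaI)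
qed

lemma double_split:
  fixes G :: "nat \<Rightarrow> nat \<Rightarrow> nat \<Rightarrow> nat \<Rightarrow> nat"
  shows "(\<Sum>x<2^Suc m. \<Sum>y<2^Suc m. G (x div 2) (x mod 2) (y div 2) (y mod 2)) =
    (\<Sum>x<2^m. \<Sum>y<2^m. G x 0 y 0) + (\<Sum>x<2^m. \<Sum>y<2^m. G x 0 y 1) + (\<Sum>x<2^m. \<Sum>y<2^m. G x 1 y 0) + (\<Sum>x<2^m. \<Sum>y<2^m. G x 1 y 1)"
  unfolding sum_splitS' by (simp add: sum.distrib)

lemma C_decomp:
  fixes a b c m :: nat
  assumes c: "c < 2^Suc m"
  shows "card {(x,y). x \<in> words (Suc m) \<and> y \<in> words (Suc m) \<and> XR (Suc m) m (addm (Suc m) x a) (addm (Suc m) y b) = addm (Suc m) (XR (Suc m) m x y) c}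
    = NN m (a div 2 + (0 + a mod 2) div 2) (b div 2 + (0 + b mod 2) div 2) (Dv m c ((a+b) mod 2))
    + NN m (a div 2 + (0 + a mod 2) div 2) (b div 2 + (1 + b mod 2) div 2) (Dv m c ((a+b) mod 2))
    + NN m (a div 2 + (1 + a mod 2) div 2) (b div 2 + (0 + b mod 2) div 2) (Dv m c ((a+b) mod 2))
    + NN m (a div 2 + (1 + a mod 2) div 2) (b div 2 + (1 + b mod 2) div 2) (Dv m c ((a+b) mod 2))"
proof -
  define G where "G = (\<lambda>x' x0 y' y0. (of_bool (int (xor ((x' + (a div 2 + (x0 + a mod 2) div 2)) mod 2^m) ((y' + (b div 2 + (y0 + b mod 2) div 2)) mod 2^m)) - int (xor x' y') = Dv m c ((a+b) mod 2)) :: nat))"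
  have "card {(x,y). x \<in> words (Suc m) \<and> y \<in> words (Suc m) \<and> XR (Suc m) m (addm (Suc m) x a) (addm (Suc m) y b) = addm (Suc m) (XR (Suc m) m x y) c}
     = (\<Sum>x<2^Suc m. \<Sum>y<2^Suc m. (of_bool (XR (Suc m) m (addm (Suc m) x a) (addm (Suc m) y b) = addm (Suc m) (XR (Suc m) m x y) c) :: nat))"
    unfolding words_def by (rule card_pairs)
  also have "\<dots> = (\<Sum>x<2^Suc m. \<Sum>y<2^Suc m. G (x div 2) (x mod 2) (y div 2) (y mod 2))"
  proof (rule sum.cong[OF refl], rule sum.cong[OF refl])
    fix x y assume "x \<in> {..<(2::nat)^Suc m}" "y \<in> {..<(2::nat)^Suc m}"
    then have x: "x < 2^Suc m" and y: "y < 2^Suc m" by simp_all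
    show "(of_bool (XR (Suc m) m (addm (Suc m) x a) (addm (Suc m) y b) = addm (Suc m) (XR (Suc m) m x y) c) :: nat) = G (x div 2) (x mod 2) (y div 2) (y mod 2)"
      unfolding G_def cond_equiv[OF x y c] ..
  qed
  also have "\<dots> = (\<Sum>x<2^m. \<Sum>y<2^m. G x 0 y 0) + (\<Sum>x<2^m. \<Sum>y<2^m. G x 0 y 1) + (\<Sum>x<2^m. \<Sum>y<2^m. G x 1 y 0) + (\<Sum>x<2^m. \<Sum>y<2^m. G x 1 y 1)"
    by (rule double_split)
  also have "\<dots> = NN m (a div 2 + (0 + a mod 2) div 2) (b div 2 + (0 + b mod 2) div 2) (Dv m c ((a+b) mod 2))
    + NN m (a div 2 + (0 + a mod 2) div 2) (b div 2 + (1 + b mod 2) div 2) (Dv m c ((a+b) mod 2))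
    + NN m (a div 2 + (1 + a mod 2) div 2) (b div 2 + (0 + b mod 2) div 2) (Dv m c ((a+b) mod 2))
    + NN m (a div 2 + (1 + a mod 2) div 2) (b div 2 + (1 + b mod 2) div 2) (Dv m c ((a+b) mod 2))"
    unfolding NN_def FF_def G_def by (simp only: add.assoc)
  finally show ?thesis .
qed

definition CC :: "nat \<Rightarrow> nat \<Rightarrow> nat \<Rightarrow> nat \<Rightarrow> nat" where
  "CC m a b c = card {(x,y). x \<in> words (Suc m) \<and> y \<in> words (Suc m) \<and> XR (Suc m) m (addm (Suc m) x a) (addm (Suc m) y b) = addm (Suc m) (XR (Suc m) m x y) c}"

lemma max_lemma:
  assumes bs: "bs < 2^Suc m" and cs: "cs < 2^Suc m"
    and le: "\<And>\<beta> \<gamma>. \<beta> < 2^Suc m \<Longrightarrow> \<gamma> < 2^Suc m \<Longrightarrow> CC m a \<beta> \<gamma> \<le> CC m a bs cs"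
  shows "Max {adpXR (Suc m) m a \<beta> \<gamma> | \<beta> \<gamma>. \<beta> \<in> words (Suc m) \<and> \<gamma> \<in> words (Suc m)} = adpXR (Suc m) m a bs cs"
proof (rule Max_eqI)
  have "{adpXR (Suc m) m a \<beta> \<gamma> | \<beta> \<gamma>. \<beta> \<in> words (Suc m) \<and> \<gamma> \<in> words (Suc m)}
     = (\<lambda>(\<beta>,\<gamma>). adpXR (Suc m) m a \<beta> \<gamma>) ` (words (Suc m) \<times> words (Suc m))" by auto
  then show "finite {adpXR (Suc m) m a \<beta> \<gamma> | \<beta> \<gamma>. \<beta> \<in> words (Suc m) \<and> \<gamma> \<in> words (Suc m)}"
    by (simp add: words_def)
next
  fix y assume "y \<in> {adpXR (Suc m) m a \<beta> \<gamma> | \<beta> \<gamma>. \<beta> \<in> words (Suc m) \<and> \<gamma> \<in> words (Suc m)}"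
  then obtain \<beta> \<gamma> where y: "y = adpXR (Suc m) m a \<beta> \<gamma>" and b: "\<beta> < 2^Suc m" and g: "\<gamma> < 2^Suc m"
    by (auto simp: words_def)
  have "real (CC m a \<beta> \<gamma>) \<le> real (CC m a bs cs)" using le[OF b g] by simp
  then show "y \<le> adpXR (Suc m) m a bs cs"
    unfolding y adpXR_def adp2_def CC_def[symmetric] by (simp add: divide_right_mono)
next
  show "adpXR (Suc m) m a bs cs \<in> {adpXR (Suc m) m a \<beta> \<gamma> | \<beta> \<gamma>. \<beta> \<in> words (Suc m) \<and> \<gamma> \<in> words (Suc m)}"
    using bs cs by (auto simp: words_def)
qed

lemma pair_bound: "m \<ge> 1 \<Longrightarrow> NN m p q D + NN m (p+1) q D \<le> max (TT m p) (TT m (p+1))"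
proof (cases "odd (D - int p - int q)")
  case True
  assume m: "m \<ge> 1"
  show ?thesis using NN_parity[OF m True] NN_le_TT[of m "p+1" q D] by simp
next
  case False
  assume m: "m \<ge> 1"
  have eq: "D - int (p+1) - int q = (D - int p - int q) - 1" by simp
  have o: "odd (D - int (p+1) - int q)" using False unfolding eq by simp
  show ?thesis using NN_parity[OF m o] NN_le_TT[of m p q D] by simp
qed

lemma four_le: "(w::nat) \<le> T \<Longrightarrow> x \<le> T \<Longrightarrow> y \<le> T \<Longrightarrow> z \<le> T \<Longrightarrow> w + x + y + z \<le> 4*T"
  by linarith

lemma claim1:
  assumes m: "m \<ge> 1" and al: "\<alpha> < 2^m"
  shows "Max {adpXR (Suc m) m (2*\<alpha>) \<beta> \<gamma> | \<beta> \<gamma>. \<beta> \<in> words (Suc m) \<and> \<gamma> \<in> words (Suc m)} = adpXR (Suc m) m (2*\<alpha>) (2*\<alpha>) 0"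
proof (rule max_lemma)
  show "2*\<alpha> < 2^Suc m" using al by simp
  show "0 < (2::nat)^Suc m" by simp
  fix \<beta> \<gamma> :: nat assume b: "\<beta> < 2^Suc m" and g: "\<gamma> < 2^Suc m"
  have "CC m (2*\<alpha>) \<beta> \<gamma> \<le> 4 * TT m \<alpha>"
    unfolding CC_def C_decomp[OF g] by (intro four_le) (simp_all add: NN_le_TT)
  also have "\<dots> = CC m (2*\<alpha>) (2*\<alpha>) 0"
  proof -
    have z: "(0::nat) < 2^Suc m" by simp
    show ?thesis unfolding CC_def C_decomp[OF z] TT_eq_NN by (simp add: Dv_def)
  qed
  finally show "CC m (2*\<alpha>) \<beta> \<gamma> \<le> CC m (2*\<alpha>) (2*\<alpha>) 0" .
qed

lemma pow_m: "m \<ge> 1 \<Longrightarrow> (2::nat)^Suc m = 4 * 2^(m-1) \<and> (2::nat)^m = 2 * 2^(m-1)"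
  by (cases m) simp_all

lemma claim2:
  assumes m: "m \<ge> 1" and al: "\<alpha> < 2^(m-1)"
  shows "Max {adpXR (Suc m) m (4*\<alpha>+1) \<beta> \<gamma> | \<beta> \<gamma>. \<beta> \<in> words (Suc m) \<and> \<gamma> \<in> words (Suc m)} = adpXR (Suc m) m (4*\<alpha>+1) (4*\<alpha>) (2^m)"
proof (rule max_lemma)
  show "4*\<alpha> < 2^Suc m" using al pow_m[OF m] by simp
  show "2^m < (2::nat)^Suc m" by simp
  have pb: "NN m (2*\<alpha>) q D + NN m (2*\<alpha>+1) q D \<le> TT m (2*\<alpha>)" for q D
    using pair_bound[OF m, of "2*\<alpha>" q D] TT_mono[OF m, of "2*\<alpha>"] by simp
  have e: "(4*\<alpha>+1) div 2 + (0 + (4*\<alpha>+1) mod 2) div 2 = 2*\<alpha>"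
          "(4*\<alpha>+1) div 2 + (1 + (4*\<alpha>+1) mod 2) div 2 = 2*\<alpha>+1" by simp_all
  fix \<beta> \<gamma> :: nat assume b: "\<beta> < 2^Suc m" and g: "\<gamma> < 2^Suc m"
  let ?D = "Dv m \<gamma> ((4*\<alpha>+1+\<beta>) mod 2)"
  have "CC m (4*\<alpha>+1) \<beta> \<gamma> \<le> 2 * TT m (2*\<alpha>)"
    unfolding CC_def C_decomp[OF g] e
    using pb[of "\<beta> div 2 + (0 + \<beta> mod 2) div 2" ?D] pb[of "\<beta> div 2 + (1 + \<beta> mod 2) div 2" ?D] by linarith
  also have "\<dots> = CC m (4*\<alpha>+1) (4*\<alpha>) (2^m)"
  proof -
    have z: "(2::nat)^m < 2^Suc m" by simp
    have f: "(4*\<alpha>) div 2 + (0 + (4*\<alpha>) mod 2) div 2 = 2*\<alpha>"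
            "(4*\<alpha>) div 2 + (1 + (4*\<alpha>) mod 2) div 2 = 2*\<alpha>" by simp_all
    have d: "Dv m (2^m) ((4*\<alpha>+1+4*\<alpha>) mod 2) = 0" unfolding Dv_def by (simp add: mod2_eq_if)
    have o: "odd (0 - int (2*\<alpha>+1) - int (2*\<alpha>))" by simp
    show ?thesis unfolding CC_def C_decomp[OF z] e f d TT_eq_NN NN_parity[OF m o] by simp
  qed
  finally show "CC m (4*\<alpha>+1) \<beta> \<gamma> \<le> CC m (4*\<alpha>+1) (4*\<alpha>) (2^m)" .
qed

lemma claim3:
  assumes m: "m \<ge> 1" and al: "\<alpha> < 2^(m-1)"
  shows "Max {adpXR (Suc m) m (4*\<alpha>+3) \<beta> \<gamma> | \<beta> \<gamma>. \<beta> \<in> words (Suc m) \<and> \<gamma> \<in> words (Suc m)} = adpXR (Suc m) m (4*\<alpha>+3) (4*(2^(m-1) - 1 - \<alpha>)) (2^m)"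
proof (rule max_lemma)
  show "4*(2^(m-1) - 1 - \<alpha>) < 2^Suc m" using al pow_m[OF m] by simp
  show "2^m < (2::nat)^Suc m" by simp
  have pb: "NN m (2*\<alpha>+1) q D + NN m (2*\<alpha>+2) q D \<le> TT m (2*\<alpha>+2)" for q D
    using pair_bound[OF m, of "2*\<alpha>+1" q D] TT_mono[OF m, of "2*\<alpha>+1"] by (simp add: add.assoc)
  have e: "(4*\<alpha>+3) div 2 + (0 + (4*\<alpha>+3) mod 2) div 2 = 2*\<alpha>+1"
          "(4*\<alpha>+3) div 2 + (1 + (4*\<alpha>+3) mod 2) div 2 = 2*\<alpha>+2" by simp_all
  fix \<beta> \<gamma> :: nat assume b: "\<beta> < 2^Suc m" and g: "\<gamma> < 2^Suc m"
  let ?D = "Dv m \<gamma> ((4*\<alpha>+3+\<beta>) mod 2)"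
  have "CC m (4*\<alpha>+3) \<beta> \<gamma> \<le> 2 * TT m (2*\<alpha>+2)"
    unfolding CC_def C_decomp[OF g] e
    using pb[of "\<beta> div 2 + (0 + \<beta> mod 2) div 2" ?D] pb[of "\<beta> div 2 + (1 + \<beta> mod 2) div 2" ?D] by linarith
  also have "\<dots> = CC m (4*\<alpha>+3) (4*(2^(m-1) - 1 - \<alpha>)) (2^m)"
  proof -
    define Q where "Q = 2*(2^(m-1) - 1 - \<alpha>)"
    have Qe: "Q = 2^m - (2*\<alpha>+2)" unfolding Q_def using al pow_m[OF m] by simp
    have le: "2*\<alpha>+2 \<le> 2^m" using al pow_m[OF m] by simp
    have b4: "4*(2^(m-1) - 1 - \<alpha>) = 2*Q" unfolding Q_def by simp
    have z: "(2::nat)^m < 2^Suc m" by simp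
    have f: "(2*Q) div 2 + (0 + (2*Q) mod 2) div 2 = Q"
            "(2*Q) div 2 + (1 + (2*Q) mod 2) div 2 = Q" by simp_all
    have d: "Dv m (2^m) ((4*\<alpha>+3+2*Q) mod 2) = 0" unfolding Dv_def by (simp add: mod2_eq_if)
    have o: "odd (0 - int (2*\<alpha>+1) - int Q)" unfolding Q_def by simp
    have c: "NN m (2*\<alpha>+2) Q 0 = TT m (2*\<alpha>+2)" unfolding Qe TT_eq_NN using NN_compl[OF le] .
    show ?thesis unfolding b4 CC_def C_decomp[OF z] e f d NN_parity[OF m o] c by simp
  qed
  finally show "CC m (4*\<alpha>+3) \<beta> \<gamma> \<le> CC m (4*\<alpha>+3) (4*(2^(m-1) - 1 - \<alpha>)) (2^m)" .
qed

theorem theorem7: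
  fixes n :: nat
  assumes "n \<ge> 2"
  shows "(\<forall>\<alpha> \<in> words (n - 1).
            Max {adpXR n (n - 1) (2 * \<alpha>) \<beta> \<gamma> | \<beta> \<gamma>. \<beta> \<in> words n \<and> \<gamma> \<in> words n}
            = adpXR n (n - 1) (2 * \<alpha>) (2 * \<alpha>) 0)
       \<and> (\<forall>\<alpha> \<in> words (n - 2).
            Max {adpXR n (n - 1) (4 * \<alpha> + 1) \<beta> \<gamma> | \<beta> \<gamma>. \<beta> \<in> words n \<and> \<gamma> \<in> words n}
            = adpXR n (n - 1) (4 * \<alpha> + 1) (4 * \<alpha>) (2 ^ (n - 1)))
       \<and> (\<forall>\<alpha> \<in> words (n - 2).
            Max {adpXR n (n - 1) (4 * \<alpha> + 3) \<beta> \<gamma> | \<beta> \<gamma>. \<beta> \<in> words n \<and> \<gamma> \<in> words n}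
            = adpXR n (n - 1) (4 * \<alpha> + 3) (4 * (2 ^ (n - 2) - 1 - \<alpha>)) (2 ^ (n - 1)))"
proof -
  obtain m where n: "n = Suc m" and m: "m \<ge> 1" using assms by (cases n) auto
  have n1: "n - 1 = m" "n - 2 = m - 1" using n by auto
  have w: "\<alpha> \<in> words k \<Longrightarrow> \<alpha> < 2^k" for \<alpha> k by (simp add: words_def)
  show ?thesis unfolding n1
  proof (intro conjI ballI)
    fix \<alpha> assume "\<alpha> \<in> words m"
    then show "Max {adpXR n m (2 * \<alpha>) \<beta> \<gamma> | \<beta> \<gamma>. \<beta> \<in> words n \<and> \<gamma> \<in> words n} = adpXR n m (2 * \<alpha>) (2 * \<alpha>) 0"
      using claim1[OF m w] unfolding n by simp
  next
    fix \<alpha> assume "\<alpha> \<in> words (m - 1)"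
    then show "Max {adpXR n m (4 * \<alpha> + 1) \<beta> \<gamma> | \<beta> \<gamma>. \<beta> \<in> words n \<and> \<gamma> \<in> words n} = adpXR n m (4 * \<alpha> + 1) (4 * \<alpha>) (2 ^ m)"
      using claim2[OF m w] unfolding n by simp
  next
    fix \<alpha> assume "\<alpha> \<in> words (m - 1)"
    then show "Max {adpXR n m (4 * \<alpha> + 3) \<beta> \<gamma> | \<beta> \<gamma>. \<beta> \<in> words n \<and> \<gamma> \<in> words n} = adpXR n m (4 * \<alpha> + 3) (4 * (2 ^ (m - 1) - 1 - \<alpha>)) (2 ^ m)"
      using claim3[OF m w] unfolding n by simp
  qed
qed

end
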